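(* Let $n\ge1$ and $B,B'\in\mathrm{GL}_n(\mathbb{R})$. Then $\ker L^\Psi_B=\operatorname{Im}L^\Phi_B$ if and only if $\ker L^\Psi_{B'}=\operatorname{Im}L^\Phi_{B'}$.
   Context: $\mathcal{S}^r(\mathbb{R}^n)$ denotes symmetric $r$-linear maps $(\mathbb{R}^n)^r\to\mathbb{R}^n$; $\langle\cdot,\cdot\rangle$ is the Euclidean inner product. For $v\in\mathbb{R}^n$, $Q_v(\xi,\eta)=\langle\xi,\eta\rangle v-\langle\xi,v\rangle\eta-\langle\eta,v\rangle\xi$. For $Q\in\mathcal{S}^2(\mathbb{R}^n)$ and matrices $A,C$: $Q\circ(A,C)(\xi,\eta)=Q(A\xi,C\eta)$, $A\circ Q(\xi,\eta)=A(Q(\xi,\eta))$. For $Q,Q'\in\mathcal{S}^2(\mathbb{R}^n)$, $[Q,Q'](\xi,\eta,\theta)=\{Q(\xi,Q'(\eta,\theta))+Q(\eta,Q'(\theta,\xi))+Q(\theta,Q'(\xi,\eta))\}-\{Q'(\xi,Q(\eta,\theta))+Q'(\eta,Q(\theta,\xi))+Q'(\theta,Q(\xi,\eta))\}$. For $B=(v_1,\dots,v_n)\in\mathrm{GL}_n(\mathbb{R})$ (columns), $L^\Phi_B:M_n(\mathbb{R})^2\to\mathcal{S}^2(\mathbb{R}^n)^n$ is $L^\Phi_B(A',B'')=(A'\circ Q_{v_i}-Q_{v_i}\circ(A',I)-Q_{v_i}\circ(I,A')+Q_{\omega_i})_{1\le i\le n}$ where $B''=(\omega_1,\dots,\omega_n)$,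 and $L^\Psi_B:\mathcal{S}^2(\mathbb{R}^n)^n\to\mathcal{S}^3(\mathbb{R}^n)^{n(n-1)/2}$ is $L^\Psi_B(q_1,\dots,q_n)=([q_i,Q_{v_j}]-[q_j,Q_{v_i}])_{1\le i<j\le n}$. *)

theory Defs
  imports "HOL-Analysis.Analysis"
begin

text \<open>R^n is modelled as real^'n for a finite index type 'n (n = CARD('n) >= 1);
  the index type is linearly ordered so that the index pairs i < j make sense.\<close>

definition sym2 :: "(real^'n \<Rightarrow> real^'n \<Rightarrow> real^'n) set" where
  "sym2 = {Q. bilinear Q \<and> (\<forall>x y. Q x y = Q y x)}"

definition Qv :: "real^'n \<Rightarrow> real^'n \<Rightarrow> real^'n \<Rightarrow> real^'n" where
  "Qv v \<xi> \<eta> = (\<xi> \<bullet> \<eta>) *\<^sub>R v - (\<xi> \<bullet> v) *\<^sub>R \<eta> - (\<eta> \<bullet> v) *\<^sub>R \<xi>"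

definition bracket ::
  "(real^'n \<Rightarrow> real^'n \<Rightarrow> real^'n) \<Rightarrow> (real^'n \<Rightarrow> real^'n \<Rightarrow> real^'n)
   \<Rightarrow> real^'n \<Rightarrow> real^'n \<Rightarrow> real^'n \<Rightarrow> real^'n" where
  "bracket Q Q' \<xi> \<eta> \<theta> =
     (Q \<xi> (Q' \<eta> \<theta>) + Q \<eta> (Q' \<theta> \<xi>) + Q \<theta> (Q' \<xi> \<eta>))
   - (Q' \<xi> (Q \<eta> \<theta>) + Q' \<eta> (Q \<theta> \<xi>) + Q' \<theta> (Q \<xi> \<eta>))"

text \<open>L^Phi_B(A', B'') with B'' = (omega_1..omega_n) given by its columns;
  v_i = column i B.\<close>
definition LPhi :: "real^'n^'n \<Rightarrow> real^'n^'n \<Rightarrow> real^'n^'n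
    \<Rightarrow> 'n \<Rightarrow> real^'n \<Rightarrow> real^'n \<Rightarrow> real^'n" where
  "LPhi B A' B'' i \<xi> \<eta> =
     A' *v (Qv (column i B) \<xi> \<eta>) - Qv (column i B) (A' *v \<xi>) \<eta>
     - Qv (column i B) \<xi> (A' *v \<eta>) + Qv (column i B'') \<xi> \<eta>"

text \<open>Component (i,j), i < j, of L^Psi_B(q_1..q_n).\<close>
definition LPsi :: "real^'n^'n \<Rightarrow> ('n \<Rightarrow> real^'n \<Rightarrow> real^'n \<Rightarrow> real^'n)
    \<Rightarrow> 'n \<Rightarrow> 'n \<Rightarrow> real^'n \<Rightarrow> real^'n \<Rightarrow> real^'n \<Rightarrow> real^'n" where
  "LPsi B q i j = (\<lambda>\<xi> \<eta> \<theta>. bracket (q i) (Qv (column j B)) \<xi> \<eta> \<theta>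
                                - bracket (q j) (Qv (column i B)) \<xi> \<eta> \<theta>)"

definition kerPsi :: "real^('n::{finite,linorder})^('n::{finite,linorder}) \<Rightarrow> (('n::{finite,linorder}) \<Rightarrow> real^('n::{finite,linorder}) \<Rightarrow> real^('n::{finite,linorder}) \<Rightarrow> real^('n::{finite,linorder})) set"
  where
  "kerPsi B = {q. (\<forall>i. q i \<in> sym2) \<and> (\<forall>i j. i < j \<longrightarrow> LPsi B q i j = (\<lambda>_ _ _. 0))}"

definition imPhi :: "real^('n::finite)^'n \<Rightarrow> ('n \<Rightarrow> real^'n \<Rightarrow> real^'n \<Rightarrow> real^'n) set" where
  "imPhi B = {LPhi B A' B'' | A' B''. True}"

end

theory Submission
  imports Defs
begin

definition TT :: "real^'n^'n \<Rightarrow> ('n::finite \<Rightarrow> real^'n \<Rightarrow> real^'n \<Rightarrow> real^'n) \<Rightarrow> 'n \<Rightarrow> real^'n \<Rightarrow> real^'n \<Rightarrow> real^'n" where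
  "TT P q = (\<lambda>j x y. \<Sum>i\<in>UNIV. P$i$j *\<^sub>R q i x y)"

lemma lin_comb: "linear f \<Longrightarrow> f (\<Sum>k\<in>S. a k *\<^sub>R x k) = (\<Sum>k\<in>S. a k *\<^sub>R f (x k))"
  by (simp add: linear_sum linear_scale o_def)

lemma lin_sumfun:
  assumes "\<And>i. linear (f i)"
  shows "linear (\<lambda>y. \<Sum>i\<in>S. c i *\<^sub>R f i y)"
  using assms by (auto intro!: linearI simp: linear_add linear_scale scaleR_add_right sum.distrib scaleR_sum_right mult.commute)

lemma TT_sym2: assumes "\<And>i. q i \<in> sym2" shows "TT P q j \<in> sym2"
proof -
  have b: "bilinear (q i)" "\<And>x y. q i x y = q i y x" for i using assms[of i] by (auto simp: sym2_def)
  show ?thesis unfolding sym2_def TT_def bilinear_def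
    using b by (auto intro!: lin_sumfun simp: bilinear_def)
qed

lemma TT_comp: "TT P (TT Q q) = TT (Q ** P) q"
proof (intro ext)
  fix j x y
  have "TT P (TT Q q) j x y = (\<Sum>i\<in>UNIV. \<Sum>k\<in>UNIV. (P$i$j * Q$k$i) *\<^sub>R q k x y)"
    unfolding TT_def by (simp add: scaleR_sum_right)
  also have "\<dots> = (\<Sum>k\<in>UNIV. \<Sum>i\<in>UNIV. (P$i$j * Q$k$i) *\<^sub>R q k x y)"
    by (rule sum.swap)
  also have "\<dots> = TT (Q ** P) q j x y"
    unfolding TT_def by (simp add: matrix_matrix_mult_def scaleR_sum_left mult.commute)
  finally show "TT P (TT Q q) j x y = TT (Q ** P) q j x y" .
qed

lemma TT_id: "TT (mat 1) q = q"
proof -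
  have e: "(if a then 1 else 0) *\<^sub>R v = (if a then v else 0)" for a and v :: "real^'a" by simp
  show ?thesis unfolding TT_def by (auto simp: fun_eq_iff mat_def e)
qed

lemma column_mult: "column j (B ** P) = (\<Sum>i\<in>UNIV. P$i$j *\<^sub>R column i B)"
  by (simp add: vec_eq_iff column_def matrix_matrix_mult_def sum_component mult.commute)

lemma Qv_lin: "linear (\<lambda>v. Qv v x y)"
  unfolding Qv_def by (auto intro!: linearI simp: inner_add_right algebra_simps)

lemma Qv_bil: "bilinear (Qv v)"
  unfolding Qv_def bilinear_def by (auto intro!: linearI simp: inner_add_left inner_add_right algebra_simps)


lemma Qv_col': "Qv (column j (B ** P)) x y = (\<Sum>i\<in>UNIV. P$i$j *\<^sub>R Qv (column i B) x y)"
  using lin_comb[OF Qv_lin, of "\<lambda>i. P$i$j" "\<lambda>i. column i B" UNIV x y] by (simp add: column_mult)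

lemma Qv_col: "Qv (column j (B ** P)) = (\<lambda>x y. \<Sum>i\<in>UNIV. P$i$j *\<^sub>R Qv (column i B) x y)"
  by (intro ext, rule Qv_col')

lemma LPhi_mult: "LPhi (B ** P) A' (B'' ** P) = TT P (LPhi B A' B'')"
  unfolding TT_def LPhi_def
  by (auto simp: fun_eq_iff Qv_col' lin_comb[OF matrix_vector_mul_linear] scaleR_diff_right
      scaleR_add_right sum_subtractf sum.distrib)

lemma t1:
  assumes "\<And>k. linear (\<lambda>y. q k x y)"
  shows "(\<Sum>k\<in>UNIV. a k *\<^sub>R q k x (\<Sum>l\<in>UNIV. b l *\<^sub>R R l y z))
     = (\<Sum>k\<in>UNIV. \<Sum>l\<in>UNIV. (a k * b l) *\<^sub>R q k x (R l y z))"
  by (simp add: lin_comb[OF assms] scaleR_sum_right)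

lemma t2:
  assumes "\<And>l. linear (\<lambda>y. R l x y)"
  shows "(\<Sum>l\<in>UNIV. b l *\<^sub>R R l x (\<Sum>k\<in>UNIV. a k *\<^sub>R q k y z))
     = (\<Sum>k\<in>UNIV. \<Sum>l\<in>UNIV. (a k * b l) *\<^sub>R R l x (q k y z))"
  apply (simp add: lin_comb[OF assms] scaleR_sum_right)
  apply (subst sum.swap)
  apply (simp add: mult.commute)
  done

lemma bracket_sum:
  fixes q R :: "'k::finite \<Rightarrow> real^'n \<Rightarrow> real^'n \<Rightarrow> real^'n"
  assumes "\<And>k. bilinear (q k)" "\<And>l. bilinear (R l)"
  shows "bracket (\<lambda>x y. \<Sum>k\<in>UNIV. a k *\<^sub>R q k x y) (\<lambda>x y. \<Sum>l\<in>UNIV. b l *\<^sub>R R l x y) \<xi> \<eta> \<theta>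
    = (\<Sum>k\<in>UNIV. \<Sum>l\<in>UNIV. (a k * b l) *\<^sub>R bracket (q k) (R l) \<xi> \<eta> \<theta>)"
proof -
  have lq: "\<And>k x. linear (\<lambda>y. q k x y)" and lR: "\<And>l x. linear (\<lambda>y. R l x y)"
    using assms by (auto simp: bilinear_def)
  show ?thesis
    unfolding bracket_def
    apply (subst t1[OF lq])+
    apply (subst t2[OF lR])+
    by (simp add: scaleR_diff_right scaleR_add_right sum_subtractf sum.distrib)
qed


lemma LPsi_mult:
  assumes "\<And>i. q i \<in> sym2"
  shows "LPsi (B ** P) (TT P q) i j \<xi> \<eta> \<theta>
    = (\<Sum>k\<in>UNIV. \<Sum>l\<in>UNIV. (P$k$i * P$l$j) *\<^sub>R LPsi B q k l \<xi> \<eta> \<theta>)"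
proof -
  have bq: "\<And>k. bilinear (q k)" using assms by (simp add: sym2_def)
  have bQ: "\<And>l. bilinear (Qv (column l B))" by (rule Qv_bil)
  have TTe: "\<And>i. TT P q i = (\<lambda>x y. \<Sum>k\<in>UNIV. P$k$i *\<^sub>R q k x y)" by (simp add: TT_def)
  have e1: "bracket (TT P q i) (Qv (column j (B ** P))) \<xi> \<eta> \<theta>
     = (\<Sum>k\<in>UNIV. \<Sum>l\<in>UNIV. (P$k$i * P$l$j) *\<^sub>R bracket (q k) (Qv (column l B)) \<xi> \<eta> \<theta>)"
    unfolding TTe Qv_col by (rule bracket_sum[OF bq bQ])
  have e2: "bracket (TT P q j) (Qv (column i (B ** P))) \<xi> \<eta> \<theta>
     = (\<Sum>k\<in>UNIV. \<Sum>l\<in>UNIV. (P$k$j * P$l$i) *\<^sub>R bracket (q k) (Qv (column l B)) \<xi> \<eta> \<theta>)"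
    unfolding TTe Qv_col by (rule bracket_sum[OF bq bQ])
  also have "\<dots> = (\<Sum>l\<in>UNIV. \<Sum>k\<in>UNIV. (P$k$j * P$l$i) *\<^sub>R bracket (q k) (Qv (column l B)) \<xi> \<eta> \<theta>)"
    by (rule sum.swap)
  also have "\<dots> = (\<Sum>k\<in>UNIV. \<Sum>l\<in>UNIV. (P$k$i * P$l$j) *\<^sub>R bracket (q l) (Qv (column k B)) \<xi> \<eta> \<theta>)"
    by (simp add: mult.commute)
  finally have e2': "bracket (TT P q j) (Qv (column i (B ** P))) \<xi> \<eta> \<theta> = \<dots>" .
  show ?thesis
    unfolding LPsi_def e1 e2'
    by (simp add: scaleR_diff_right sum_subtractf)
qed

lemma ker_mult:
  assumes "q \<in> kerPsi B" shows "TT P q \<in> kerPsi (B ** P)"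
proof -
  have s: "\<And>i. q i \<in> sym2" and z: "\<And>i j. i < j \<Longrightarrow> LPsi B q i j = (\<lambda>_ _ _. 0)"
    using assms by (auto simp: kerPsi_def)
  have zz: "LPsi B q k l x y z = 0" for k l x y z
  proof (cases k l rule: linorder_cases)
    case less then show ?thesis using z[of k l] by (auto simp: fun_eq_iff)
  next
    case equal then show ?thesis by (simp add: LPsi_def)
  next
    case greater
    then have "LPsi B q l k x y z = 0" using z[of l k] by (auto simp: fun_eq_iff)
    then show ?thesis by (simp add: LPsi_def)
  qed
  show ?thesis
    unfolding kerPsi_def using s
    by (auto simp: TT_sym2 fun_eq_iff LPsi_mult zz)
qed

lemma im_mult: "x \<in> imPhi B \<Longrightarrow> TT P x \<in> imPhi (B ** P)"
proof -
  assume "x \<in> imPhi B"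
  then obtain A' B'' where "x = LPhi B A' B''" by (auto simp: imPhi_def)
  then have "TT P x = LPhi (B ** P) A' (B'' ** P)" by (simp add: LPhi_mult)
  then show ?thesis unfolding imPhi_def by blast
qed

lemma main:
  fixes B P :: "real^('n::{finite,linorder})^('n::{finite,linorder})"
  assumes "invertible P" "kerPsi B = imPhi B"
  shows "kerPsi (B ** P) = imPhi (B ** P)"
proof -
  obtain P' where P': "P ** P' = mat 1" "P' ** P = mat 1" using assms(1) by (auto simp: invertible_def)
  have BB: "B ** P ** P' = B" by (simp add: P' matrix_mul_assoc[symmetric])
  have inv: "TT P (TT P' x) = x" for x by (simp add: TT_comp P' TT_id)
  show ?thesis
  proof (intro set_eqI iffI)
    fix x assume "x \<in> kerPsi (B ** P)"
    then have "TT P' x \<in> kerPsi B" using ker_mult[of x "B ** P" P'] BB by simp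
    then have "TT P' x \<in> imPhi B" using assms(2) by simp
    then show "x \<in> imPhi (B ** P)" using im_mult[of "TT P' x" B P] inv by simp
  next
    fix x assume "x \<in> imPhi (B ** P)"
    then have "TT P' x \<in> imPhi B" using im_mult[of x "B ** P" P'] BB by simp
    then have "TT P' x \<in> kerPsi B" using assms(2) by simp
    then show "x \<in> kerPsi (B ** P)" using ker_mult[of "TT P' x" B P] inv by simp
  qed
qed

theorem lemma2p11:
  fixes B B' :: "real^('n::{finite,linorder})^('n::{finite,linorder})"
  assumes "invertible B" and "invertible B'"
  shows "kerPsi B = imPhi B \<longleftrightarrow> kerPsi B' = imPhi B'"
proof -
  obtain Bi where Bi: "B ** Bi = mat 1" "Bi ** B = mat 1" using assms(1) by (auto simp: invertible_def)
  obtain Bi' where Bi': "B' ** Bi' = mat 1" "Bi' ** B' = mat 1" using assms(2) by (auto simp: invertible_def)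
  have e1: "B ** (Bi ** B') = B'" by (simp add: matrix_mul_assoc Bi)
  have e2: "B' ** (Bi' ** B) = B" by (simp add: matrix_mul_assoc Bi')
  have i1: "invertible (Bi ** B')" using assms Bi by (metis invertible_def invertible_mult)
  have i2: "invertible (Bi' ** B)" using assms Bi' by (metis invertible_def invertible_mult)
  show ?thesis using main[OF i1, of B] main[OF i2, of B'] e1 e2 by auto
qed

end
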